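(* Let $\Lambda$ be a finitely aligned left cancellative small category. (1) Suppose $s=\bigcup_{i=1}^n\alpha_i\beta_i^*\in S_\Lambda$ with $\alpha_i,\beta_i\in\Lambda$, and suppose $e$ is an idempotent of $S_\Lambda$ with $e\leqslant a^*a$ where $a=\alpha_j\beta_j^*$ for some $1\le j\le n$. Then $ses^*=aea^*$. (2) If $\xi\subseteq E(S_\Lambda)$ is a tight filter, $\alpha_1,\dots,\alpha_n\in S_\Lambda$, and $\bigcup_{i=1}^n\alpha_i\alpha_i^*\in\xi$, then $\alpha_j\alpha_j^*\in\xi$ for some $1\le j\le n$.
   Context: A small category $\Lambda$ (objects $\Lambda^0$, range $r$, source $s$, composition $\alpha\beta$ when $s(\alpha)=r(\beta)$) is left cancellative if $\alpha\beta=\alpha\gamma$ implies $\beta=\gamma$. Write $\alpha\Lambda=\{\alpha\beta:s(\alpha)=r(\beta)\}$. $\Lambda$ is finitely aligned if for all $\alpha,\beta$ there is a finite (possibly empty) $F\subseteq\Lambda$ with $\alpha\Lambda\cap\beta\Lambda=\bigcup_{f\in F}f\Lambda$. Each $\alpha\in\Lambda$ is regarded as the partial bijection $s(\alpha)\Lambda\to\alpha\Lambda$, $\beta\mapsto\alpha\beta$, in the symmetric inverse monoid $\mathcal{I}(\Lambda)$ (partial bijections of $\Lambda$ under composition on the largest possible domain, with zero the empty map); $\alpha^*$ is its inverse $\alpha\beta\mapsto\beta$. $S_\Lambda$ is the inverse subsemigroup of $\mathcal{I}(\Lambda)$ generated by $\{\alpha:\alpha\in\Lambda\}$, and $E(S_\Lambda)$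 its idempotents (identity maps on subsets); products like $\alpha\beta^*$ denote composition, and unions are unions of partial maps (graphs). The order on idempotents is $e\leqslant f$ iff $ef=e$. A filter is a nonempty proper subset of $E(S_\Lambda)$ closed under products and upward closed; a tight filter is a filter in the closure (in $\{0,1\}^{E(S_\Lambda)}$) of the set of maximal filters. *)

theory Defs
  imports "HOL-Analysis.Analysis"
begin

text \<open>Objects are identified with
  their identity morphisms: the object set is rng ` L.\<close>

definition small_category ::
  "'a set \<Rightarrow> ('a \<Rightarrow> 'a) \<Rightarrow> ('a \<Rightarrow> 'a) \<Rightarrow> ('a \<Rightarrow> 'a \<Rightarrow> 'a) \<Rightarrow> bool" where
  "small_category L rng src cmp \<longleftrightarrow>
     (\<forall>a\<in>L. rng a \<in> L \<and> src a \<in> L) \<and>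
     (\<forall>a\<in>L. rng (rng a) = rng a \<and> src (rng a) = rng a \<and>
              rng (src a) = src a \<and> src (src a) = src a) \<and>
     (\<forall>a\<in>L. \<forall>b\<in>L. src a = rng b \<longrightarrow>
        cmp a b \<in> L \<and> rng (cmp a b) = rng a \<and> src (cmp a b) = src b) \<and>
     (\<forall>a\<in>L. \<forall>b\<in>L. \<forall>c\<in>L. src a = rng b \<longrightarrow> src b = rng c \<longrightarrow>
        cmp (cmp a b) c = cmp a (cmp b c)) \<and>
     (\<forall>a\<in>L. cmp (rng a) a = a \<and> cmp a (src a) = a)"

definition left_cancellative ::
  "'a set \<Rightarrow> ('a \<Rightarrow> 'a) \<Rightarrow> ('a \<Rightarrow> 'a) \<Rightarrow> ('a \<Rightarrow> 'a \<Rightarrow> 'a) \<Rightarrow> bool" where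
  "left_cancellative L rng src cmp \<longleftrightarrow>
     (\<forall>a\<in>L. \<forall>b\<in>L. \<forall>c\<in>L. src a = rng b \<longrightarrow> src a = rng c \<longrightarrow>
        cmp a b = cmp a c \<longrightarrow> b = c)"

definition right_ideal ::
  "'a set \<Rightarrow> ('a \<Rightarrow> 'a) \<Rightarrow> ('a \<Rightarrow> 'a) \<Rightarrow> ('a \<Rightarrow> 'a \<Rightarrow> 'a) \<Rightarrow> 'a \<Rightarrow> 'a set" where
  "right_ideal L rng src cmp a = {cmp a b | b. b \<in> L \<and> src a = rng b}"

definition finitely_aligned ::
  "'a set \<Rightarrow> ('a \<Rightarrow> 'a) \<Rightarrow> ('a \<Rightarrow> 'a) \<Rightarrow> ('a \<Rightarrow> 'a \<Rightarrow> 'a) \<Rightarrow> bool" where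
  "finitely_aligned L rng src cmp \<longleftrightarrow>
     (\<forall>a\<in>L. \<forall>b\<in>L. \<exists>F. finite F \<and> F \<subseteq> L \<and>
        right_ideal L rng src cmp a \<inter> right_ideal L rng src cmp b =
        (\<Union>f\<in>F. right_ideal L rng src cmp f))"

definition emb ::
  "'a set \<Rightarrow> ('a \<Rightarrow> 'a) \<Rightarrow> ('a \<Rightarrow> 'a) \<Rightarrow> ('a \<Rightarrow> 'a \<Rightarrow> 'a) \<Rightarrow> 'a \<Rightarrow> ('a \<rightharpoonup> 'a)" where
  "emb L rng src cmp a = (\<lambda>b. if b \<in> L \<and> rng b = src a then Some (cmp a b) else None)"

definition pinv :: "('a \<rightharpoonup> 'a) \<Rightarrow> ('a \<rightharpoonup> 'a)" where
  "pinv f = (\<lambda>y. if \<exists>x. f x = Some y then Some (SOME x. f x = Some y) else None)"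

text \<open>S_\<Lambda>: inverse subsemigroup of I(\<Lambda>) generated by the \<alpha>'s
  (= subsemigroup generated by the \<alpha>'s and the \<alpha>*'s), product = composition of partial maps.\<close>
inductive_set S_Lambda ::
  "'a set \<Rightarrow> ('a \<Rightarrow> 'a) \<Rightarrow> ('a \<Rightarrow> 'a) \<Rightarrow> ('a \<Rightarrow> 'a \<Rightarrow> 'a) \<Rightarrow> ('a \<rightharpoonup> 'a) set"
  for L rng src cmp where
  gen: "a \<in> L \<Longrightarrow> emb L rng src cmp a \<in> S_Lambda L rng src cmp"
| gen_inv: "a \<in> L \<Longrightarrow> pinv (emb L rng src cmp a) \<in> S_Lambda L rng src cmp"
| mult: "f \<in> S_Lambda L rng src cmp \<Longrightarrow> g \<in> S_Lambda L rng src cmp \<Longrightarrow>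
          (f \<circ>\<^sub>m g) \<in> S_Lambda L rng src cmp"

definition idempotents :: "('a \<rightharpoonup> 'a) set \<Rightarrow> ('a \<rightharpoonup> 'a) set" where
  "idempotents S = {e \<in> S. e \<circ>\<^sub>m e = e}"

definition idem_le :: "('a \<rightharpoonup> 'a) \<Rightarrow> ('a \<rightharpoonup> 'a) \<Rightarrow> bool" where
  "idem_le e f \<longleftrightarrow> e \<circ>\<^sub>m f = e"

definition is_filter :: "('a \<rightharpoonup> 'a) set \<Rightarrow> ('a \<rightharpoonup> 'a) set \<Rightarrow> bool" where
  "is_filter E \<xi> \<longleftrightarrow> \<xi> \<noteq> {} \<and> \<xi> \<subseteq> E \<and> \<xi> \<noteq> E \<and>
     (\<forall>e\<in>\<xi>. \<forall>f\<in>\<xi>. e \<circ>\<^sub>m f \<in> \<xi>) \<and>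
     (\<forall>e\<in>\<xi>. \<forall>f\<in>E. idem_le e f \<longrightarrow> f \<in> \<xi>)"

definition is_maximal_filter :: "('a \<rightharpoonup> 'a) set \<Rightarrow> ('a \<rightharpoonup> 'a) set \<Rightarrow> bool" where
  "is_maximal_filter E \<xi> \<longleftrightarrow> is_filter E \<xi> \<and> (\<forall>\<eta>. is_filter E \<eta> \<longrightarrow> \<xi> \<subseteq> \<eta> \<longrightarrow> \<eta> = \<xi>)"

text \<open>Subsets of E identified with points of {0,1}^E (product of discrete spaces).\<close>
definition char_fun :: "('a \<rightharpoonup> 'a) set \<Rightarrow> ('a \<rightharpoonup> 'a) set \<Rightarrow> (('a \<rightharpoonup> 'a) \<Rightarrow> bool)" where
  "char_fun E \<xi> = restrict (\<lambda>e. e \<in> \<xi>) E"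

definition is_tight_filter :: "('a \<rightharpoonup> 'a) set \<Rightarrow> ('a \<rightharpoonup> 'a) set \<Rightarrow> bool" where
  "is_tight_filter E \<xi> \<longleftrightarrow> is_filter E \<xi> \<and>
     char_fun E \<xi> \<in> (product_topology (\<lambda>_. discrete_topology (UNIV::bool set)) E) closure_of
                      (char_fun E ` {\<eta>. is_maximal_filter E \<eta>})"

end

theory Submission
  imports Defs
begin

definition pinj :: "('a \<rightharpoonup> 'a) \<Rightarrow> bool" where
  "pinj f \<longleftrightarrow> (\<forall>x y z. f x = Some z \<longrightarrow> f y = Some z \<longrightarrow> x = y)"

definition pid :: "'a set \<Rightarrow> ('a \<rightharpoonup> 'a)" where
  "pid D = (\<lambda>x. if x \<in> D then Some x else None)"

lemma map_eqI: "(\<And>x y. f x = Some y \<longleftrightarrow> g x = Some y) \<Longrightarrow> f = g"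
  by (rule ext) (metis not_Some_eq)

lemma pinv_Some_any: "pinv f y = Some x \<Longrightarrow> f x = Some y"
proof -
  assume h: "pinv f y = Some x"
  then have ex: "\<exists>x. f x = Some y" unfolding pinv_def by (auto split: if_splits)
  with h have "x = (SOME x. f x = Some y)" unfolding pinv_def by auto
  with ex show ?thesis using someI_ex[OF ex] by simp
qed

lemma pinv_Some: "pinj f \<Longrightarrow> pinv f y = Some x \<longleftrightarrow> f x = Some y"
proof
  assume "pinv f y = Some x" then show "f x = Some y" by (rule pinv_Some_any)
next
  assume p: "pinj f" and h: "f x = Some y"
  then have ex: "\<exists>x. f x = Some y" by blast
  have "f (SOME x. f x = Some y) = Some y" by (rule someI_ex[OF ex])
  with p h have e: "(SOME x. f x = Some y) = x" unfolding pinj_def by blast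
  have "pinv f y = Some (SOME x. f x = Some y)" unfolding pinv_def using ex by (simp only: if_True)
  then show "pinv f y = Some x" using e by simp
qed

lemma pinj_pinv: "pinj (pinv f)"
  unfolding pinj_def
proof (intro allI impI)
  fix x y z assume "pinv f x = Some z" "pinv f y = Some z"
  then have "f z = Some x" "f z = Some y" by (blast intro: pinv_Some_any)+
  then show "x = y" by simp
qed

lemma pinv_pinv: assumes p: "pinj f" shows "pinv (pinv f) = f"
proof (rule map_eqI)
  fix x y
  show "pinv (pinv f) x = Some y \<longleftrightarrow> f x = Some y"
    by (simp only: pinv_Some[OF pinj_pinv] pinv_Some[OF p])
qed

lemma pinj_comp: assumes pf: "pinj f" and pg: "pinj g" shows "pinj (f \<circ>\<^sub>m g)"
  unfolding pinj_def
proof (intro allI impI)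
  fix x y z assume h1: "(f \<circ>\<^sub>m g) x = Some z" and h2: "(f \<circ>\<^sub>m g) y = Some z"
  from h1 obtain w1 where w1: "g x = Some w1" "f w1 = Some z" unfolding map_comp_Some_iff by blast
  from h2 obtain w2 where w2: "g y = Some w2" "f w2 = Some z" unfolding map_comp_Some_iff by blast
  from pf w1(2) w2(2) have "w1 = w2" unfolding pinj_def by blast
  with pg w1(1) w2(1) show "x = y" unfolding pinj_def by blast
qed

lemma pinv_comp: assumes pf: "pinj f" and pg: "pinj g" shows "pinv (f \<circ>\<^sub>m g) = pinv g \<circ>\<^sub>m pinv f"
proof (rule map_eqI)
  fix x y
  show "pinv (f \<circ>\<^sub>m g) x = Some y \<longleftrightarrow> (pinv g \<circ>\<^sub>m pinv f) x = Some y"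
    by (simp only: pinv_Some[OF pinj_comp[OF pf pg]] map_comp_Some_iff pinv_Some[OF pf] pinv_Some[OF pg]) blast
qed

lemma pinj_emb: assumes lc: "left_cancellative L rng src cmp" and a: "a \<in> L" shows "pinj (emb L rng src cmp a)"
  unfolding pinj_def
proof (intro allI impI)
  fix x y z assume h1: "emb L rng src cmp a x = Some z" and h2: "emb L rng src cmp a y = Some z"
  from h1 have x: "x \<in> L" "rng x = src a" "cmp a x = z" unfolding emb_def by (auto split: if_splits)
  from h2 have y: "y \<in> L" "rng y = src a" "cmp a y = z" unfolding emb_def by (auto split: if_splits)
  from lc a x y show "x = y" unfolding left_cancellative_def by metis
qed

lemma S_props:
  assumes lc: "left_cancellative L rng src cmp"
  shows "f \<in> S_Lambda L rng src cmp \<Longrightarrow> pinj f \<and> pinv f \<in> S_Lambda L rng src cmp"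
proof (induction rule: S_Lambda.induct)
  case (gen a)
  show ?case
  proof
    show "pinj (emb L rng src cmp a)" by (rule pinj_emb[OF lc gen])
    show "pinv (emb L rng src cmp a) \<in> S_Lambda L rng src cmp" by (rule S_Lambda.gen_inv[OF gen])
  qed
next
  case (gen_inv a)
  have e: "pinv (pinv (emb L rng src cmp a)) = emb L rng src cmp a"
    by (rule pinv_pinv[OF pinj_emb[OF lc gen_inv]])
  show ?case
  proof
    show "pinj (pinv (emb L rng src cmp a))" by (rule pinj_pinv)
    show "pinv (pinv (emb L rng src cmp a)) \<in> S_Lambda L rng src cmp"
      unfolding e by (rule S_Lambda.gen[OF gen_inv])
  qed
next
  case (mult f g)
  have pf: "pinj f" using mult.IH(1) by (rule conjunct1)
  have pg: "pinj g" using mult.IH(2) by (rule conjunct1)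
  have e: "pinv (f \<circ>\<^sub>m g) = pinv g \<circ>\<^sub>m pinv f" by (rule pinv_comp[OF pf pg])
  show ?case
  proof
    show "pinj (f \<circ>\<^sub>m g)" by (rule pinj_comp[OF pf pg])
    show "pinv (f \<circ>\<^sub>m g) \<in> S_Lambda L rng src cmp"
      unfolding e by (rule S_Lambda.mult[OF conjunct2[OF mult.IH(2)] conjunct2[OF mult.IH(1)]])
  qed
qed

lemma idem_pid: "pinj e \<Longrightarrow> e \<circ>\<^sub>m e = e \<Longrightarrow> e = pid (dom e)"
proof (rule map_eqI)
  fix x y assume p: "pinj e" and i: "e \<circ>\<^sub>m e = e"
  have k: "e x = Some y \<Longrightarrow> y = x" for y
  proof -
    assume h: "e x = Some y"
    then have "(e \<circ>\<^sub>m e) x = e y" by simp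
    with i h have "e y = Some y" by simp
    with p h show "y = x" unfolding pinj_def by blast
  qed
  show "e x = Some y \<longleftrightarrow> pid (dom e) x = Some y"
    unfolding pid_def using k by auto
qed

lemma pid_comp: "pid A \<circ>\<^sub>m pid B = pid (A \<inter> B)"
  by (rule ext) (simp add: pid_def map_comp_def)

lemma dom_pid[simp]: "dom (pid A) = A"
  by (auto simp: pid_def dom_def)

lemma pid_eq: "pid A = pid B \<longleftrightarrow> A = B"
  by (metis dom_pid)

lemma idem_le_pid: "idem_le (pid A) (pid B) \<longleftrightarrow> A \<subseteq> B"
  unfolding idem_le_def pid_comp pid_eq by blast

lemma comp_pinv_pid: "pinj a \<Longrightarrow> a \<circ>\<^sub>m pinv a = pid (ran a)"
  by (rule map_eqI) (auto simp: map_comp_Some_iff pinv_Some pid_def ran_def)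

lemma pinv_comp_pid: "pinj a \<Longrightarrow> pinv a \<circ>\<^sub>m a = pid (dom a)"
  by (rule map_eqI) (auto simp: map_comp_Some_iff pinv_Some pid_def pinj_def)

lemma maxfilter_cover:
  assumes EP: "\<forall>e\<in>E. e = pid (dom e)"
    and Ec: "\<forall>e\<in>E. \<forall>f\<in>E. e \<circ>\<^sub>m f \<in> E"
    and mf: "is_maximal_filter E \<eta>"
    and u: "u \<in> \<eta>" and pE: "\<forall>j\<in>J. p j \<in> E" and fin: "finite J"
    and du: "dom u \<subseteq> (\<Union>j\<in>J. dom (p j))"
  shows "\<exists>j\<in>J. p j \<in> \<eta>"
proof (rule ccontr)
  assume nj: "\<not> (\<exists>j\<in>J. p j \<in> \<eta>)"
  have flt: "is_filter E \<eta>" using mf unfolding is_maximal_filter_def by blast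
  have etaE: "\<eta> \<subseteq> E" and etane: "\<eta> \<noteq> E"
    and etam: "\<forall>e\<in>\<eta>. \<forall>f\<in>\<eta>. e \<circ>\<^sub>m f \<in> \<eta>"
    and etau: "\<forall>e\<in>\<eta>. \<forall>f\<in>E. idem_le e f \<longrightarrow> f \<in> \<eta>"
    using flt unfolding is_filter_def by blast+
  have domc: "dom (e \<circ>\<^sub>m f) = dom e \<inter> dom f" if "e \<in> E" "f \<in> E" for e f
  proof -
    have he: "e = pid (dom e)" and hf: "f = pid (dom f)" using EP that by blast+
    have "e \<circ>\<^sub>m f = pid (dom e) \<circ>\<^sub>m pid (dom f)" by (rule arg_cong2[where f="(\<circ>\<^sub>m)", OF he hf])
    then show ?thesis by (simp add: pid_comp)
  qed
  have lec: "idem_le e f \<longleftrightarrow> dom e \<subseteq> dom f" if "e \<in> E" "f \<in> E" for e f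
  proof -
    have he: "e = pid (dom e)" and hf: "f = pid (dom f)" using EP that by blast+
    have "idem_le e f = idem_le (pid (dom e)) (pid (dom f))" by (rule arg_cong2[where f=idem_le, OF he hf])
    then show ?thesis by (simp add: idem_le_pid)
  qed
  have allE: "{h\<in>E. \<exists>g\<in>\<eta>. dom (p j) \<inter> dom g \<subseteq> dom h} = E" if j: "j \<in> J" for j
  proof (rule ccontr)
    let ?F = "{h\<in>E. \<exists>g\<in>\<eta>. dom (p j) \<inter> dom g \<subseteq> dom h}"
    assume ne: "?F \<noteq> E"
    have sub: "\<eta> \<subseteq> ?F" using etaE by blast
    have pin: "p j \<in> ?F" using pE j u by blast
    have "is_filter E ?F"
      unfolding is_filter_def
    proof (intro conjI ballI impI)
      show "?F \<noteq> {}" using pin by blast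
      show "?F \<subseteq> E" by blast
      show "?F \<noteq> E" by fact
    next
      fix e f assume e: "e \<in> ?F" and f: "f \<in> ?F"
      then obtain g1 g2 where g: "g1 \<in> \<eta>" "g2 \<in> \<eta>" "dom (p j) \<inter> dom g1 \<subseteq> dom e"
        "dom (p j) \<inter> dom g2 \<subseteq> dom f" by blast
      have g12: "g1 \<circ>\<^sub>m g2 \<in> \<eta>" using etam g by blast
      have d1: "dom (g1 \<circ>\<^sub>m g2) = dom g1 \<inter> dom g2" using domc g etaE by blast
      have d2: "dom (e \<circ>\<^sub>m f) = dom e \<inter> dom f" using domc e f by blast
      have efE: "e \<circ>\<^sub>m f \<in> E" using Ec e f by blast
      have "dom (p j) \<inter> dom (g1 \<circ>\<^sub>m g2) \<subseteq> dom (e \<circ>\<^sub>m f)"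
        unfolding d1 d2 using g(3,4) by blast
      then show "e \<circ>\<^sub>m f \<in> ?F" using efE g12 by blast
    next
      fix e f assume e: "e \<in> ?F" and f: "f \<in> E" and le: "idem_le e f"
      then have de: "dom e \<subseteq> dom f" using lec by blast
      from e obtain g where g: "g \<in> \<eta>" "dom (p j) \<inter> dom g \<subseteq> dom e" by blast
      then have "dom (p j) \<inter> dom g \<subseteq> dom f" using de by blast
      with f g(1) show "f \<in> ?F" by blast
    qed
    with mf sub have "?F = \<eta>" unfolding is_maximal_filter_def by blast
    with pin nj j show False by blast
  qed
  obtain h where h: "h \<in> E" "h \<notin> \<eta>" using etaE etane by blast
  have each: "\<forall>j\<in>J. \<exists>g\<in>\<eta>. dom (p j) \<inter> dom g \<subseteq> dom h"
    using allE h(1) by blast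
  have comb: "K \<subseteq> J \<Longrightarrow> \<exists>g\<in>\<eta>. \<forall>j\<in>K. dom (p j) \<inter> dom g \<subseteq> dom h" for K
    using finite_subset[OF _ fin]
  proof (induction K rule: infinite_finite_induct)
    case (infinite A) then show ?case using fin finite_subset by blast
  next
    case empty then show ?case using u by blast
  next
    case (insert x A)
    then obtain g where g: "g \<in> \<eta>" "\<forall>j\<in>A. dom (p j) \<inter> dom g \<subseteq> dom h" by blast
    obtain g' where g': "g' \<in> \<eta>" "dom (p x) \<inter> dom g' \<subseteq> dom h" using each insert by blast
    have gg: "g \<circ>\<^sub>m g' \<in> \<eta>" using etam g g' by blast
    have dg: "dom (g \<circ>\<^sub>m g') = dom g \<inter> dom g'" using domc g g' etaE by blast
    have "\<forall>j\<in>insert x A. dom (p j) \<inter> dom (g \<circ>\<^sub>m g') \<subseteq> dom h"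
      unfolding dg using g(2) g'(2) by blast
    with gg show ?case by blast
  qed
  obtain g where g: "g \<in> \<eta>" "\<forall>j\<in>J. dom (p j) \<inter> dom g \<subseteq> dom h" using comb by blast
  have gu: "g \<circ>\<^sub>m u \<in> \<eta>" using etam g u by blast
  have "dom (g \<circ>\<^sub>m u) = dom g \<inter> dom u" using domc g u etaE by blast
  also have "\<dots> \<subseteq> dom h" using g du by blast
  finally have "idem_le (g \<circ>\<^sub>m u) h" using lec gu etaE h by blast
  with etau gu h show False by blast
qed

theorem lemma4p2:
  fixes L :: "'a set" and rng src :: "'a \<Rightarrow> 'a" and cmp :: "'a \<Rightarrow> 'a \<Rightarrow> 'a"
  assumes "small_category L rng src cmp"
    and "left_cancellative L rng src cmp"
    and "finitely_aligned L rng src cmp"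
  shows
   "(\<forall>(t :: 'a \<rightharpoonup> 'a) (\<alpha> :: nat \<Rightarrow> 'a) (\<beta> :: nat \<Rightarrow> 'a) (n :: nat) (j :: nat) e.
       t \<in> S_Lambda L rng src cmp \<longrightarrow>
       (\<forall>i\<in>{1..n}. \<alpha> i \<in> L \<and> \<beta> i \<in> L) \<longrightarrow>
       Map.graph t = (\<Union>i\<in>{1..n}. Map.graph (emb L rng src cmp (\<alpha> i) \<circ>\<^sub>m pinv (emb L rng src cmp (\<beta> i)))) \<longrightarrow>
       j \<in> {1..n} \<longrightarrow>
       e \<in> idempotents (S_Lambda L rng src cmp) \<longrightarrow>
       (let a = emb L rng src cmp (\<alpha> j) \<circ>\<^sub>m pinv (emb L rng src cmp (\<beta> j)) in
          idem_le e (pinv a \<circ>\<^sub>m a) \<longrightarrow>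
          t \<circ>\<^sub>m e \<circ>\<^sub>m pinv t = a \<circ>\<^sub>m e \<circ>\<^sub>m pinv a))
    \<and>
    (\<forall>\<xi> (\<alpha> :: nat \<Rightarrow> ('a \<rightharpoonup> 'a)) (n :: nat).
       is_tight_filter (idempotents (S_Lambda L rng src cmp)) \<xi> \<longrightarrow>
       (\<forall>i\<in>{1..n}. \<alpha> i \<in> S_Lambda L rng src cmp) \<longrightarrow>
       (\<exists>u\<in>\<xi>. Map.graph u = (\<Union>i\<in>{1..n}. Map.graph (\<alpha> i \<circ>\<^sub>m pinv (\<alpha> i)))) \<longrightarrow>
       (\<exists>j\<in>{1..n}. \<alpha> j \<circ>\<^sub>m pinv (\<alpha> j) \<in> \<xi>))"
proof (intro conjI allI impI)
  have lc: "left_cancellative L rng src cmp" by fact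
  note SP = S_props[OF lc]
  {
    fix t :: "'a \<rightharpoonup> 'a" and \<alpha> \<beta> :: "nat \<Rightarrow> 'a" and n j :: nat and e
    assume tS: "t \<in> S_Lambda L rng src cmp"
      and ab: "\<forall>i\<in>{1..n}. \<alpha> i \<in> L \<and> \<beta> i \<in> L"
      and gr: "Map.graph t = (\<Union>i\<in>{1..n}. Map.graph (emb L rng src cmp (\<alpha> i) \<circ>\<^sub>m pinv (emb L rng src cmp (\<beta> i))))"
      and j: "j \<in> {1..n}"
      and eE: "e \<in> idempotents (S_Lambda L rng src cmp)"
    define a where "a = emb L rng src cmp (\<alpha> j) \<circ>\<^sub>m pinv (emb L rng src cmp (\<beta> j))"
    have pt: "pinj t" using SP tS by blast
    have at: "a x = Some y \<Longrightarrow> t x = Some y" for x y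
    proof -
      assume "a x = Some y"
      then have "(x, y) \<in> Map.graph a" by (rule in_graphI)
      then have "(x, y) \<in> Map.graph t" using gr j unfolding a_def by blast
      then show ?thesis by (rule in_graphD)
    qed
    have pa: "pinj a" using pt at unfolding pinj_def by blast
    have pe: "pinj e" "e \<circ>\<^sub>m e = e" using eE SP unfolding idempotents_def by blast+
    then have epid: "e = pid (dom e)" by (rule idem_pid)
    have "(let a = a in idem_le e (pinv a \<circ>\<^sub>m a) \<longrightarrow>
          t \<circ>\<^sub>m e \<circ>\<^sub>m pinv t = a \<circ>\<^sub>m e \<circ>\<^sub>m pinv a)"
      unfolding Let_def
    proof
      assume "idem_le e (pinv a \<circ>\<^sub>m a)"
      then have da: "dom e \<subseteq> dom a" using epid pinv_comp_pid[OF pa] idem_le_pid by metis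
      show "t \<circ>\<^sub>m e \<circ>\<^sub>m pinv t = a \<circ>\<^sub>m e \<circ>\<^sub>m pinv a"
      proof (rule map_eqI)
        fix y z
        have L: "(t \<circ>\<^sub>m e \<circ>\<^sub>m pinv t) y = Some z \<longleftrightarrow> (\<exists>x. t x = Some y \<and> x \<in> dom e \<and> t x = Some z)"
          by (subst epid, simp add: map_comp_Some_iff pinv_Some[OF pt] pid_def) (metis dom_pid epid)
        have R: "(a \<circ>\<^sub>m e \<circ>\<^sub>m pinv a) y = Some z \<longleftrightarrow> (\<exists>x. a x = Some y \<and> x \<in> dom e \<and> a x = Some z)"
          by (subst epid, simp add: map_comp_Some_iff pinv_Some[OF pa] pid_def) (metis dom_pid epid)
        show "(t \<circ>\<^sub>m e \<circ>\<^sub>m pinv t) y = Some z \<longleftrightarrow> (a \<circ>\<^sub>m e \<circ>\<^sub>m pinv a) y = Some z"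
          unfolding L R using da at by (metis domD option.inject subsetD)
      qed
    qed
    then show "(let a = emb L rng src cmp (\<alpha> j) \<circ>\<^sub>m pinv (emb L rng src cmp (\<beta> j)) in
          idem_le e (pinv a \<circ>\<^sub>m a) \<longrightarrow>
          t \<circ>\<^sub>m e \<circ>\<^sub>m pinv t = a \<circ>\<^sub>m e \<circ>\<^sub>m pinv a)" unfolding a_def .
  }
  {
    fix \<xi> and \<alpha> :: "nat \<Rightarrow> ('a \<rightharpoonup> 'a)" and n :: nat
    assume tf: "is_tight_filter (idempotents (S_Lambda L rng src cmp)) \<xi>"
      and aS: "\<forall>i\<in>{1..n}. \<alpha> i \<in> S_Lambda L rng src cmp"
      and ex: "\<exists>u\<in>\<xi>. Map.graph u = (\<Union>i\<in>{1..n}. Map.graph (\<alpha> i \<circ>\<^sub>m pinv (\<alpha> i)))"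
    define E where "E = idempotents (S_Lambda L rng src cmp)"
    define p where "p i = \<alpha> i \<circ>\<^sub>m pinv (\<alpha> i)" for i
    obtain u where u: "u \<in> \<xi>" "Map.graph u = (\<Union>i\<in>{1..n}. Map.graph (p i))"
      using ex unfolding p_def by blast
    have EP: "\<forall>e\<in>E. e = pid (dom e)"
      using SP idem_pid unfolding E_def idempotents_def by blast
    have Ec: "\<forall>e\<in>E. \<forall>f\<in>E. e \<circ>\<^sub>m f \<in> E"
    proof (intro ballI)
      fix e f assume e: "e \<in> E" and f: "f \<in> E"
      then have "e \<circ>\<^sub>m f \<in> S_Lambda L rng src cmp" unfolding E_def idempotents_def
        by (blast intro: S_Lambda.mult)
      moreover have "(e \<circ>\<^sub>m f) \<circ>\<^sub>m (e \<circ>\<^sub>m f) = e \<circ>\<^sub>m f"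
      proof -
        have "e = pid (dom e)" "f = pid (dom f)" using EP e f by blast+
        then show ?thesis by (metis pid_comp Int_absorb)
      qed
      ultimately show "e \<circ>\<^sub>m f \<in> E" unfolding E_def idempotents_def by blast
    qed
    have pE: "\<forall>j\<in>{1..n}. p j \<in> E"
    proof
      fix j assume j: "j \<in> {1..n}"
      have "p j \<in> S_Lambda L rng src cmp" unfolding p_def using aS j SP by (blast intro: S_Lambda.mult)
      moreover have "p j = pid (ran (\<alpha> j))" unfolding p_def using comp_pinv_pid aS j SP by blast
      ultimately show "p j \<in> E" unfolding E_def idempotents_def by (simp add: pid_comp)
    qed
    have du: "dom u \<subseteq> (\<Union>j\<in>{1..n}. dom (p j))"
    proof
      fix x assume "x \<in> dom u"
      then obtain y where "u x = Some y" by blast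
      then have "(x, y) \<in> Map.graph u" by (rule in_graphI)
      then obtain i where "i \<in> {1..n}" "(x, y) \<in> Map.graph (p i)" using u by blast
      then show "x \<in> (\<Union>j\<in>{1..n}. dom (p j))" by (blast dest: in_graphD)
    qed
    show "\<exists>j\<in>{1..n}. \<alpha> j \<circ>\<^sub>m pinv (\<alpha> j) \<in> \<xi>"
    proof (rule ccontr)
      assume nj: "\<not> (\<exists>j\<in>{1..n}. \<alpha> j \<circ>\<^sub>m pinv (\<alpha> j) \<in> \<xi>)"
      let ?X = "product_topology (\<lambda>_. discrete_topology (UNIV::bool set)) E"
      have fx: "is_filter E \<xi>" using tf unfolding E_def is_tight_filter_def by blast
      then have xE: "\<xi> \<subseteq> E" unfolding is_filter_def by blast
      have cl: "char_fun E \<xi> \<in> ?X closure_of (char_fun E ` {\<eta>. is_maximal_filter E \<eta>})"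
        using tf unfolding E_def is_tight_filter_def by blast
      have opn: "openin ?X {f \<in> topspace ?X. f k \<in> {b}}" if "k \<in> E" for k b
        by (rule openin_continuous_map_preimage[OF continuous_map_product_projection[OF that]]) simp
      define T where "T = {f \<in> topspace ?X. f u \<in> {True}} \<inter>
         ((\<Inter>j\<in>{1..n}. {f \<in> topspace ?X. f (p j) \<in> {False}}) \<inter> topspace ?X)"
      have uE: "u \<in> E" using u xE by blast
      have o1: "openin ?X {f \<in> topspace ?X. f u \<in> {True}}" by (rule opn[OF uE])
      have o2: "openin ?X ((\<Inter>j\<in>{1..n}. {f \<in> topspace ?X. f (p j) \<in> {False}}) \<inter> topspace ?X)"
      proof (rule openin_INT)
        show "finite {1..n}" by simp
        fix j assume "j \<in> {1..n}"
        then have "p j \<in> E" using pE by blast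
        then show "openin ?X {f \<in> topspace ?X. f (p j) \<in> {False}}" by (rule opn)
      qed
      have oT: "openin ?X T" unfolding T_def by (rule openin_Int[OF o1 o2])
      have cT: "char_fun E \<xi> \<in> T"
        using cl unfolding in_closure_of T_def
        using u uE pE nj unfolding char_fun_def p_def by auto
      then obtain y where y: "y \<in> char_fun E ` {\<eta>. is_maximal_filter E \<eta>}" "y \<in> T"
        using cl oT unfolding in_closure_of by blast
      then obtain \<eta> where eta: "is_maximal_filter E \<eta>" "y = char_fun E \<eta>" by blast
      have "u \<in> \<eta>" using y(2) eta uE unfolding T_def char_fun_def by auto
      moreover have "\<forall>j\<in>{1..n}. p j \<notin> \<eta>" using y(2) eta pE unfolding T_def char_fun_def by auto
      moreover have "\<exists>j\<in>{1..n}. p j \<in> \<eta>"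
        using maxfilter_cover[OF EP Ec eta(1) \<open>u \<in> \<eta>\<close> pE _ du] by simp
      ultimately show False by blast
    qed
  }
qed

end
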